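(* Let $h$ be a positive integer, $\alpha=\dfrac{h+\sqrt{h^2+4}}{2}$, and define $q_{-1}=0$, $q_0=1$, $q_{k+1}=hq_k+q_{k-1}$ for $k\ge0$. Then for integers $n\ge1$: $$\lceil\alpha n\rceil-\alpha n=\begin{cases} j/\alpha^{2k} & \text{if } n=jq_{2k-1},\ k\ge1,\ 1\le j<\alpha^{2k},\\ (\alpha-1)/\alpha^{2k+1} & \text{if } n=q_{2k-1}+q_{2k},\ k\ge0,\\ (\alpha+1)/\alpha^{2k+2} & \text{if } n=q_{2k+1}-q_{2k},\ k\ge0,\end{cases}$$ and $n(\lceil\alpha n\rceil-\alpha n)\ge1$ for all other integers $n\ge1$ (i.e. all $n\ge1$ not of any of these three forms).
   Context: The numbers $q_k$ are the denominators of the convergents of the regular continued fraction $\alpha=[h;h,h,\dots]$. *)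

theory Defs
  imports Complex_Main
begin

text \<open>Shifted denominators: Qs h m = q_{m-1}, so Qs h 0 = q_{-1} = 0, Qs h 1 = q_0 = 1,
  q_{k+1} = h q_k + q_{k-1}.\<close>
fun Qs :: "nat \<Rightarrow> nat \<Rightarrow> nat" where
  "Qs h 0 = 0"
| "Qs h (Suc 0) = 1"
| "Qs h (Suc (Suc m)) = h * Qs h (Suc m) + Qs h m"

definition q :: "nat \<Rightarrow> int \<Rightarrow> nat" where
  "q h k = Qs h (nat (k + 1))"

definition alpha :: "nat \<Rightarrow> real" where
  "alpha h = (real h + sqrt (real h ^ 2 + 4)) / 2"

end

theory Submission
  imports Defs
begin


lemma q_odd: "q h (2 * int k - 1) = Qs h (2*k)"
proof - have "2 * int k - 1 + 1 = int (2*k)" by simp then show ?thesis unfolding q_def by (simp only: nat_int) qed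
lemma q_even: "q h (2 * int k) = Qs h (2*k+1)"
proof - have "2 * int k + 1 = int (2*k+1)" by simp then show ?thesis unfolding q_def by (simp only: nat_int) qed
lemma q_odd2: "q h (2 * int k + 1) = Qs h (2*k+2)"
proof - have "2 * int k + 1 + 1 = int (2*k+2)" by simp then show ?thesis unfolding q_def by (simp only: nat_int) qed

lemma alpha_sq: "alpha h ^ 2 = real h * alpha h + 1"
proof -
  have s: "sqrt (real h ^ 2 + 4) ^ 2 = real h ^ 2 + 4" by simp
  show ?thesis unfolding alpha_def using s by (simp add: power2_eq_square field_simps)
qed

lemma alpha_gt1: "h \<ge> 1 \<Longrightarrow> alpha h > 1"
proof -
  assume "h \<ge> 1"
  have "sqrt (real h ^ 2 + 4) \<ge> sqrt 4" by (rule real_sqrt_le_mono) simp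
  then have "sqrt (real h ^ 2 + 4) \<ge> 2" by simp
  with \<open>h\<ge>1\<close> show ?thesis unfolding alpha_def by simp
qed

lemma Qs_rel_aux:
  fixes h :: nat and tt :: real
  assumes "h \<ge> 1" and t_def: "tt = - 1 / alpha h"
  shows "alpha h * Qs h i - Qs h (Suc i) = - (tt ^ i) \<and> alpha h * Qs h (Suc i) - Qs h (Suc (Suc i)) = - (tt ^ Suc i)"
proof (induction i)
  case 0
  have "alpha h > 1" using alpha_gt1 assms by simp
  have "alpha h * alpha h = real h * alpha h + 1" using alpha_sq[of h] by (simp add: power2_eq_square)
  then have "alpha h - h = 1 / alpha h" using \<open>alpha h > 1\<close> by (simp add: field_simps)
  then show ?case by (simp add: t_def)
next
  case (Suc i)
  have a1: "alpha h > 1" using alpha_gt1 assms by simp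
  have tt: "tt^2 = h * tt + 1"
  proof -
    have "alpha h * alpha h = real h * alpha h + 1" using alpha_sq[of h] by (simp add: power2_eq_square)
    then have "alpha h * (alpha h - h) = 1" by (simp add: algebra_simps)
    then have ah: "alpha h - h = 1 / alpha h" using a1 by (simp add: field_simps)
    have "tt^2 = (1/alpha h) * (1/alpha h)" by (simp add: t_def power2_eq_square)
    also have "\<dots> = (1/alpha h)*(alpha h - h)" using ah by simp
    also have "\<dots> = h*tt + 1" using a1 by (simp add: t_def field_simps)
    finally show ?thesis .
  qed
  have "tt ^ Suc (Suc i) = tt^i * tt^2" by (simp add: power_add[symmetric])
  also have "\<dots> = h * tt^(Suc i) + tt^i" using tt by (simp add: algebra_simps)
  finally have e: "tt ^ Suc (Suc i) = h * tt^(Suc i) + tt^i" .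
  have r: "alpha h * Qs h (Suc (Suc i)) - Qs h (Suc (Suc (Suc i))) = h * (alpha h * Qs h (Suc i) - Qs h (Suc (Suc i))) + (alpha h * Qs h i - Qs h (Suc i))"
    by (simp add: algebra_simps)
  from Suc have e1: "alpha h * Qs h i - Qs h (Suc i) = - (tt ^ i)" and e2: "alpha h * Qs h (Suc i) - Qs h (Suc (Suc i)) = - (tt ^ Suc i)" by auto
  have "alpha h * Qs h (Suc (Suc i)) - Qs h (Suc (Suc (Suc i))) = - (tt ^ Suc (Suc i))"
    unfolding r e1 e2 e by (simp add: algebra_simps)
  then show ?case using e2 by simp
qed

lemma V1: "h \<ge> 1 \<Longrightarrow> real (Qs h (2*k+1)) - alpha h * real (Qs h (2*k)) = 1 / alpha h ^ (2*k)"
proof -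
  assume h: "h \<ge> 1"
  have "alpha h * Qs h (2*k) - Qs h (Suc (2*k)) = - ((- 1 / alpha h) ^ (2*k))"
    using Qs_rel_aux[OF h refl, of "2*k"] by blast
  moreover have "(- 1 / alpha h) ^ (2*k) = 1 / alpha h ^ (2*k)"
    by (simp add: power_mult power_divide)
  ultimately show ?thesis by simp
qed

lemma V2: "h \<ge> 1 \<Longrightarrow> real (Qs h (2*k+2)) - alpha h * real (Qs h (2*k+1)) = - 1 / alpha h ^ (2*k+1)"
proof -
  assume h: "h \<ge> 1"
  have "alpha h * Qs h (2*k+1) - Qs h (Suc (2*k+1)) = - ((- 1 / alpha h) ^ (2*k+1))"
    using Qs_rel_aux[OF h refl, of "2*k+1"] by blast
  moreover have "(- 1 / alpha h) ^ (2*k+1) = - 1 / alpha h ^ (2*k+1)"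
    by (simp add: power_mult power_divide)
  ultimately show ?thesis by simp
qed


lemma Qs_rec: "Qs h (i+2) = h * Qs h (i+1) + Qs h i"
proof - have "i+2 = Suc (Suc i)" by simp then show ?thesis by simp qed

lemma ceil_eq: "0 \<le> of_int a - r \<Longrightarrow> of_int a - r < 1 \<Longrightarrow> \<lceil>r::real\<rceil> = a"
  by (intro ceiling_unique) auto

lemma int_eq_close: "0 \<le> of_int a - r \<Longrightarrow> of_int a - r < 1 \<Longrightarrow> 0 \<le> of_int b - r \<Longrightarrow> of_int b - r < (1::real) \<Longrightarrow> a = b"
  using ceil_eq by metis

lemma P1:
  assumes h: "h \<ge> 1" and j: "1 \<le> j" "real j < alpha h ^ (2*k)"
  shows "real (j * Qs h (2*k+1)) - alpha h * real (j * Qs h (2*k)) = real j / alpha h ^ (2*k)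
     \<and> 0 \<le> real j / alpha h ^ (2*k) \<and> real j / alpha h ^ (2*k) < 1"
proof -
  have a: "alpha h > 1" using alpha_gt1 h by simp
  have "real (j * Qs h (2*k+1)) - alpha h * real (j * Qs h (2*k)) = real j * (real (Qs h (2*k+1)) - alpha h * real (Qs h (2*k)))"
    by (simp add: algebra_simps)
  also have "\<dots> = real j / alpha h ^ (2*k)" using V1[OF h, of k] by simp
  finally show ?thesis using a j by (simp add: divide_less_eq)
qed

lemma P2:
  assumes h: "h \<ge> 1"
  shows "real (Qs h (2*k+1) + Qs h (2*k+2)) - alpha h * real (Qs h (2*k) + Qs h (2*k+1)) = (alpha h - 1) / alpha h ^ (2*k+1)
     \<and> 0 \<le> (alpha h - 1) / alpha h ^ (2*k+1) \<and> (alpha h - 1) / alpha h ^ (2*k+1) < 1"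
proof -
  have a: "alpha h > 1" using alpha_gt1 h by simp
  have "real (Qs h (2*k+1) + Qs h (2*k+2)) - alpha h * real (Qs h (2*k) + Qs h (2*k+1))
     = (real (Qs h (2*k+1)) - alpha h * real (Qs h (2*k))) + (real (Qs h (2*k+2)) - alpha h * real (Qs h (2*k+1)))"
    by (simp add: algebra_simps)
  also have "\<dots> = 1 / alpha h ^ (2*k) - 1 / alpha h ^ (2*k+1)" using V1[OF h, of k] V2[OF h, of k] by simp
  also have "\<dots> = (alpha h - 1) / alpha h ^ (2*k+1)" using a by (simp add: field_simps)
  finally have e: "real (Qs h (2*k+1) + Qs h (2*k+2)) - alpha h * real (Qs h (2*k) + Qs h (2*k+1)) = (alpha h - 1) / alpha h ^ (2*k+1)" .
  have p: "alpha h ^ 1 \<le> alpha h ^ (2*k+1)" by (rule power_increasing) (use a in auto)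
  have "alpha h - 1 < alpha h ^ (2*k+1)" using p by simp
  then show ?thesis using e a by (simp add: divide_less_eq)
qed

lemma P3:
  assumes h: "h \<ge> 1" and n: "int (Qs h (2*k+2)) - int (Qs h (2*k+1)) \<ge> 1"
  shows "real_of_int (int (Qs h (2*k+3)) - int (Qs h (2*k+2))) - alpha h * real_of_int (int (Qs h (2*k+2)) - int (Qs h (2*k+1))) = (alpha h + 1) / alpha h ^ (2*k+2)
     \<and> 0 \<le> (alpha h + 1) / alpha h ^ (2*k+2) \<and> (alpha h + 1) / alpha h ^ (2*k+2) < 1"
proof -
  have a: "alpha h > 1" using alpha_gt1 h by simp
  have v1: "real (Qs h (2*k+3)) - alpha h * real (Qs h (2*k+2)) = 1 / alpha h ^ (2*k+2)"
  proof -
    have e1: "2*(k+1)+1 = 2*k+3" "2*(k+1) = 2*k+2" by simp_all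
    have "real (Qs h (2*(k+1)+1)) - alpha h * real (Qs h (2*(k+1))) = 1 / alpha h ^ (2*(k+1))" by (rule V1[OF h])
    moreover have "2*(k+1)+1 = 2*k+3" by simp
    ultimately show ?thesis by (metis e1(2))
  qed
  have "real_of_int (int (Qs h (2*k+3)) - int (Qs h (2*k+2))) - alpha h * real_of_int (int (Qs h (2*k+2)) - int (Qs h (2*k+1)))
     = (real (Qs h (2*k+3)) - alpha h * real (Qs h (2*k+2))) - (real (Qs h (2*k+2)) - alpha h * real (Qs h (2*k+1)))"
    by (simp add: algebra_simps)
  also have "\<dots> = 1 / alpha h ^ (2*k+2) + 1 / alpha h ^ (2*k+1)" using v1 V2[OF h, of k] by simp
  also have "\<dots> = (alpha h + 1) / alpha h ^ (2*k+2)" using a by (simp add: field_simps)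
  finally have e: "real_of_int (int (Qs h (2*k+3)) - int (Qs h (2*k+2))) - alpha h * real_of_int (int (Qs h (2*k+2)) - int (Qs h (2*k+1))) = (alpha h + 1) / alpha h ^ (2*k+2)" .
  have sq: "alpha h ^ 2 = real h * alpha h + 1" by (rule alpha_sq)
  have lt: "alpha h + 1 < alpha h ^ (2*k+2)"
  proof (cases k)
    case 0
    have "Qs h 2 = h" by (simp add: numeral_2_eq_2)
    with n 0 have "h \<ge> 2" by simp
    then have "real h * alpha h \<ge> 2 * alpha h" using a by (intro mult_right_mono) auto
    moreover have "alpha h * alpha h = real h * alpha h + 1" using sq by (simp add: power2_eq_square)
    ultimately have l: "alpha h + 1 < alpha h * alpha h" using a by linarith
    have e0: "alpha h ^ (2*k+2) = alpha h * alpha h" using 0 by simp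
    show ?thesis unfolding e0 by (rule l)
  next
    case (Suc k')
    have "real h * alpha h \<ge> 1 * alpha h" using a h by (intro mult_right_mono) auto
    then have "alpha h ^ 2 \<ge> alpha h + 1" using sq by linarith
    moreover have "alpha h ^ 2 < alpha h ^ (2*k+2)" using Suc a by (intro power_strict_increasing) auto
    ultimately show ?thesis by simp
  qed
  have pos: "alpha h ^ (2*k+2) > 0" using a by simp
  have l1: "(alpha h + 1) / alpha h ^ (2*k+2) < 1" using lt pos by (simp add: divide_less_eq)
  have l0: "0 \<le> (alpha h + 1) / alpha h ^ (2*k+2)" using a pos by simp
  show ?thesis using e l0 l1 by blast
qed


lemma base_int:
  fixes h n r m :: int
  assumes "h \<ge> 1" "n \<ge> 1" "r \<ge> 1" "r*n < h" "h*m = (h^2+1)*n + r"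
  shows "n = 1 \<or> n = h - 1"
proof -
  have e: "n + r = h*(m - h*n)" using assms(5) by (simp add: algebra_simps power2_eq_square)
  have "r \<le> r*n" using assms by simp
  have "n \<le> r*n" using assms by simp
  have "0 < h*(m - h*n)" using e assms by simp
  then have "m - h*n > 0" using assms(1) by (simp add: zero_less_mult_iff)
  have "h*(m - h*n) < 2*h" using e \<open>r \<le> r*n\<close> \<open>n \<le> r*n\<close> assms by linarith
  then have "m - h*n < 2" using assms(1) by simp
  then have "m - h*n = 1" using \<open>m - h*n > 0\<close> by simp
  then have r: "r = h - n" using e by simp
  show ?thesis
  proof (rule ccontr)
    assume "\<not> ?thesis"
    then have "n \<ge> 2" "h - n - 1 \<ge> 1" using assms r by auto
    then have "(h - n - 1)*(n - 1) \<ge> 1*1" by (intro mult_mono) auto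
    moreover have "(h - n - 1)*(n - 1) = (h - n)*n - h + 1" by (simp add: algebra_simps)
    moreover have "r*n = (h-n)*n" using r by simp
    ultimately show False using assms(4) by linarith
  qed
qed


lemma ar3: "(n::int) = h*(c3 - b) + (b - a) \<Longrightarrow> c3 = h*b + a \<Longrightarrow> c4 = h*c3 + b \<Longrightarrow> n = c4 - c3"
  by (simp add: algebra_simps)

definition forms :: "nat \<Rightarrow> nat \<Rightarrow> bool" where
  "forms h n \<longleftrightarrow> (\<exists>k j. k\<ge>1 \<and> 1\<le>j \<and> real j < alpha h^(2*k) \<and> n = j*Qs h (2*k))
     \<or> (\<exists>k. n = Qs h (2*k) + Qs h (2*k+1))
     \<or> (\<exists>k. int n = int (Qs h (2*k+2)) - int (Qs h (2*k+1)))"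

lemma descent:
  assumes h: "h \<ge> 1"
  shows "1 \<le> n \<Longrightarrow> 0 \<le> of_int m - alpha h * real n \<Longrightarrow> real n * (of_int m - alpha h * real n) < 1 \<Longrightarrow> forms h n"
proof (induction n arbitrary: m rule: less_induct)
  case (less n)
  define A where "A = alpha h"
  define x where "x = of_int m - A * real n"
  define c where "c = real h ^ 2 + 1 - real h * A"
  have a: "A > 1" using alpha_gt1 h A_def by simp
  have sq: "A^2 = real h * A + 1" using alpha_sq A_def by simp
  have "c * A^2 - 1 = (1 - real h * A) * (A^2 - real h * A - 1)"
    unfolding c_def by (simp add: algebra_simps power2_eq_square power3_eq_cube)
  then have cA: "c * A^2 = 1" using sq by simp
  have A2: "A^2 > 1" using a by (simp add: one_less_power)
  have ceq: "c = 1 / A^2" using cA A2 a by (simp add: eq_divide_eq)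
  have c0: "c > 0" using ceq A2 a by simp
  have c1: "c < 1" using ceq A2 a by simp
  have x0: "x \<ge> 0" and nx: "real n * x < 1" using less.prems unfolding x_def A_def by auto
  have n1: "n \<ge> 1" using less.prems by simp
  define r where "r = int h * m - (int h ^ 2 + 1) * int n"
  have rr: "real_of_int r = real h * x - real n * c"
    unfolding r_def x_def c_def by (simp add: algebra_simps)
  show ?case
  proof (cases "r \<ge> 0")
    case True
    have "real h * x * real n < real h"
      using nx h by (simp add: mult.commute mult.left_commute)
    moreover have "real n * c * real n > 0" using c0 n1 by simp
    ultimately have "real_of_int r * real n < real h" unfolding rr by (simp add: algebra_simps)
    then have "real_of_int (r * int n) < real_of_int (int h)" by simp
    then have rn: "r * int n < int h" by (simp only: of_int_less_iff)
    show ?thesis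
    proof (cases "r = 0")
      case True
      have "int n = int h * (m - int h * int n)" using True unfolding r_def by (simp add: algebra_simps power2_eq_square)
      moreover have "m - int h * int n > 0"
      proof -
        have "0 < int h * (m - int h * int n)" using calculation n1 by linarith
        then show ?thesis using h by (simp add: zero_less_mult_iff)
      qed
      ultimately have "int n = int h * int (nat (m - int h * int n))" by simp
      then have j: "n = h * nat (m - int h * int n)" by (simp only: of_nat_mult[symmetric] of_nat_eq_iff)
      obtain j where j: "n = h * j" using j by blast
      then have jpos: "j \<ge> 1" using n1 by (cases j) auto
      have "real h * x = real n * c" using True rr by simp
      then have xj: "x = real j * c" using j h by (simp add: algebra_simps)
      have "real n * x = real h * (real j * real j) * c" using j xj by simp
      then have "real h * (real j * real j) * c < 1" using nx by simp
      then have "real h * (real j * real j) / A^2 < 1" using ceq by simp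
      then have hj: "real h * (real j * real j) < A^2" using A2 a by (simp add: divide_less_eq)
      have "real j \<le> real h * (real j * real j)" using h jpos
        by (metis le_square mult_le_mono of_nat_le_iff of_nat_mult mult_1 mult_le_cancel2 nat_mult_1) 
      then have "real j < alpha h ^ (2*1)" using hj A_def by simp
      moreover have "Qs h (2*1) = h" by (simp add: numeral_2_eq_2)
      ultimately show ?thesis unfolding forms_def using j jpos by (metis le_refl mult.commute)
    next
      case False
      have "int h * m = (int h ^ 2 + 1) * int n + r" unfolding r_def by simp
      then have "int n = 1 \<or> int n = int h - 1"
        using base_int[of "int h" "int n" r m] False \<open>0 \<le> r\<close> rn h n1 by simp
      then show ?thesis
      proof
        assume "int n = 1"
        then have "n = Qs h (2*0) + Qs h (2*0+1)" by simp
        then show ?thesis unfolding forms_def by blast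
      next
        assume "int n = int h - 1"
        moreover have "Qs h (2*0+2) = h" by (simp add: numeral_2_eq_2)
        ultimately have "int n = int (Qs h (2*0+2)) - int (Qs h (2*0+1))" by simp
        then show ?thesis unfolding forms_def by blast
      qed
    qed
  next
    case False
    define n' where "n' = nat (- r)"
    define m' where "m' = m - int h * int n"
    have n'1: "n' \<ge> 1" using False unfolding n'_def by simp
    have nr: "real n' = real n * c - real h * x" using False rr unfolding n'_def by simp
    have "of_int m' - A * real n' - A^2 * x = (A^2 - real h * A - 1) * (real n * (A + real h) - of_int m)"
      unfolding nr m'_def x_def c_def by (simp add: algebra_simps power2_eq_square)
    then have x'e: "of_int m' - A * real n' = A^2 * x" using sq by simp
    have "real n' \<le> real n * c" using nr h x0 by simp
    also have "\<dots> < real n" using c1 n1 by simp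
    finally have lt: "n' < n" by simp
    have "real n' * (A^2 * x) = real n * x * (c * A^2) - real h * A^2 * x^2"
      unfolding nr by (simp add: algebra_simps power2_eq_square)
    also have "\<dots> \<le> real n * x" using cA h by simp
    finally have n'x': "real n' * (A^2 * x) < 1" using nx by simp
    have x'0: "A^2 * x \<ge> 0" using x0 by simp
    have IH: "forms h n'" using less.IH[OF lt n'1, of m'] x'e n'x' x'0 unfolding A_def by simp
    have x'1: "of_int m' - A * real n' < 1"
    proof (rule ccontr)
      assume "\<not> ?thesis"
      then have "real n' * (A^2 * x) \<ge> 1 * 1" unfolding x'e using n'1 by (intro mult_mono) auto
      then show False using n'x' by simp
    qed
    have x'0': "0 \<le> of_int m' - A * real n'" using x'e x'0 by simp
    have nsum: "int n = int h * m' + int n'" using False unfolding n'_def m'_def r_def by (simp add: algebra_simps power2_eq_square)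
    have rec1: "Qs h (2*k+2) = h * Qs h (2*k+1) + Qs h (2*k)" for k using Qs_rec[of h "2*k"] by simp
    have rec2: "Qs h (2*k+3) = h * Qs h (2*k+2) + Qs h (2*k+1)" for k
    proof - have e: "2*k+3 = Suc (Suc (2*k+1))" "2*k+2 = Suc (2*k+1)" by simp_all
      show ?thesis unfolding e by (rule Qs.simps(3)) qed
    have rec3: "Qs h (2*k+4) = h * Qs h (2*k+3) + Qs h (2*k+2)" for k
    proof - have e: "2*k+4 = Suc (Suc (2*k+2))" "2*k+3 = Suc (2*k+2)" by simp_all
      show ?thesis unfolding e by (rule Qs.simps(3)) qed
    from IH show ?thesis unfolding forms_def
    proof (elim disjE exE conjE)
      fix k j assume k: "k \<ge> 1" "1 \<le> j" "real j < alpha h ^ (2*k)" "n' = j * Qs h (2*k)"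
      from P1[OF h k(2) k(3)] have p: "real (j * Qs h (2*k+1)) - A * real n' = real j / alpha h ^ (2*k)"
        "0 \<le> real j / alpha h ^ (2*k)" "real j / alpha h ^ (2*k) < 1" unfolding A_def k(4) by auto
      have "m' = int (j * Qs h (2*k+1))"
      proof -
        have c1: "0 \<le> real_of_int (int (j * Qs h (2*k+1))) - A * real n'" using p(1) p(2) by simp
        have c2: "real_of_int (int (j * Qs h (2*k+1))) - A * real n' < 1" using p(1) p(3) by simp
        show ?thesis using int_eq_close[OF x'0' x'1 c1 c2] .
      qed
      then have "int n = int (j * Qs h (2*(k+1)))" using nsum k(4) rec1[of k] by (simp add: algebra_simps)
      then have "n = j * Qs h (2*(k+1))" by linarith
      moreover have "alpha h ^ (2*k) \<le> alpha h ^ (2*(k+1))" using a A_def by (intro power_increasing) auto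
      then have "real j < alpha h ^ (2*(k+1))" using k(3) by linarith
      ultimately have "k+1 \<ge> 1 \<and> 1\<le>j \<and> real j < alpha h^(2*(k+1)) \<and> n = j*Qs h (2*(k+1))" using k(2) by simp
      then show "(\<exists>k j. k\<ge>1 \<and> 1\<le>j \<and> real j < alpha h^(2*k) \<and> n = j*Qs h (2*k))
        \<or> (\<exists>k. n = Qs h (2*k) + Qs h (2*k+1))
        \<or> (\<exists>k. int n = int (Qs h (2*k+2)) - int (Qs h (2*k+1)))"
        by blast
    next
      fix k assume k: "n' = Qs h (2*k) + Qs h (2*k+1)"
      from P2[OF h, of k] have p: "real (Qs h (2*k+1) + Qs h (2*k+2)) - A * real n' = (alpha h - 1) / alpha h ^ (2*k+1)"
        "0 \<le> (alpha h - 1) / alpha h ^ (2*k+1)" "(alpha h - 1) / alpha h ^ (2*k+1) < 1" unfolding A_def k by auto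
      have "m' = int (Qs h (2*k+1) + Qs h (2*k+2))"
      proof -
        have c1: "0 \<le> real_of_int (int (Qs h (2*k+1) + Qs h (2*k+2))) - A * real n'" using p(1) p(2) by simp
        have c2: "real_of_int (int (Qs h (2*k+1) + Qs h (2*k+2))) - A * real n' < 1" using p(1) p(3) by simp
        show ?thesis using int_eq_close[OF x'0' x'1 c1 c2] .
      qed
      then have "int n = int (Qs h (2*k+2) + Qs h (2*k+3))" using nsum k rec1[of k] rec2[of k] by (simp add: algebra_simps)
      then have n2: "n = Qs h (2*k+2) + Qs h (2*k+3)" by (simp only: of_nat_eq_iff)
      have e: "2*(k+1) = 2*k+2" "2*(k+1)+1 = 2*k+3" by simp_all
      have e3: "2*k+2+1 = 2*k+3" by simp
      have "n = Qs h (2*(k+1)) + Qs h (2*(k+1)+1)" unfolding e(1) e3 by (rule n2)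
      then show "(\<exists>k j. k\<ge>1 \<and> 1\<le>j \<and> real j < alpha h^(2*k) \<and> n = j*Qs h (2*k))
        \<or> (\<exists>k. n = Qs h (2*k) + Qs h (2*k+1))
        \<or> (\<exists>k. int n = int (Qs h (2*k+2)) - int (Qs h (2*k+1)))" by blast
    next
      fix k assume k: "int n' = int (Qs h (2*k+2)) - int (Qs h (2*k+1))"
      have kk: "int (Qs h (2*k+2)) - int (Qs h (2*k+1)) \<ge> 1" using k n'1 by simp
      have rn': "real n' = real_of_int (int (Qs h (2*k+2)) - int (Qs h (2*k+1)))"
        using k by (metis of_int_of_nat_eq)
      from P3[OF h kk] have p: "real_of_int (int (Qs h (2*k+3)) - int (Qs h (2*k+2))) - A * real n' = (alpha h + 1) / alpha h ^ (2*k+2)"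
        "0 \<le> (alpha h + 1) / alpha h ^ (2*k+2)" "(alpha h + 1) / alpha h ^ (2*k+2) < 1" unfolding A_def rn' by auto
      have "m' = int (Qs h (2*k+3)) - int (Qs h (2*k+2))"
      proof -
        have c1: "0 \<le> real_of_int (int (Qs h (2*k+3)) - int (Qs h (2*k+2))) - A * real n'" using p(1) p(2) by simp
        have c2: "real_of_int (int (Qs h (2*k+3)) - int (Qs h (2*k+2))) - A * real n' < 1" using p(1) p(3) by simp
        show ?thesis using int_eq_close[OF x'0' x'1 c1 c2] .
      qed
      then have nn: "int n = int h * (int (Qs h (2*k+3)) - int (Qs h (2*k+2))) + (int (Qs h (2*k+2)) - int (Qs h (2*k+1)))"
        using nsum k by (simp only:)
      have i3: "int (Qs h (2*k+3)) = int h * int (Qs h (2*k+2)) + int (Qs h (2*k+1))"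
        using rec2[of k] by (simp only: of_nat_add[symmetric] of_nat_mult[symmetric] of_nat_eq_iff)
      have i4: "int (Qs h (2*k+4)) = int h * int (Qs h (2*k+3)) + int (Qs h (2*k+2))"
        using rec3[of k] by (simp only: of_nat_add[symmetric] of_nat_mult[symmetric] of_nat_eq_iff)
      have "int n = int (Qs h (2*k+4)) - int (Qs h (2*k+3))" using ar3[OF nn i3 i4] .
      moreover have "2*(k+1)+2 = 2*k+4" "2*(k+1)+1 = 2*k+3" by simp_all
      ultimately have "int n = int (Qs h (2*(k+1)+2)) - int (Qs h (2*(k+1)+1))" by metis
      then show "(\<exists>k j. k\<ge>1 \<and> 1\<le>j \<and> real j < alpha h^(2*k) \<and> n = j*Qs h (2*k))
        \<or> (\<exists>k. n = Qs h (2*k) + Qs h (2*k+1))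
        \<or> (\<exists>k. int n = int (Qs h (2*k+2)) - int (Qs h (2*k+1)))" by blast
    qed
  qed
qed



theorem lemma4:
  fixes h n :: nat
  assumes "h \<ge> 1" and "n \<ge> 1"
  defines "d \<equiv> real_of_int \<lceil>alpha h * real n\<rceil> - alpha h * real n"
  shows "(\<forall>k j::nat. k \<ge> 1 \<and> 1 \<le> j \<and> real j < alpha h ^ (2*k)
            \<and> n = j * q h (2 * int k - 1) \<longrightarrow> d = real j / alpha h ^ (2*k))
       \<and> (\<forall>k::nat. n = q h (2 * int k - 1) + q h (2 * int k)
            \<longrightarrow> d = (alpha h - 1) / alpha h ^ (2*k+1))
       \<and> (\<forall>k::nat. int n = int (q h (2 * int k + 1)) - int (q h (2 * int k))
            \<longrightarrow> d = (alpha h + 1) / alpha h ^ (2*k+2))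
       \<and> ((\<not> (\<exists>k j::nat. k \<ge> 1 \<and> 1 \<le> j \<and> real j < alpha h ^ (2*k)
               \<and> n = j * q h (2 * int k - 1))
           \<and> \<not> (\<exists>k::nat. n = q h (2 * int k - 1) + q h (2 * int k))
           \<and> \<not> (\<exists>k::nat. int n = int (q h (2 * int k + 1)) - int (q h (2 * int k))))
          \<longrightarrow> real n * d \<ge> 1)"
proof (intro conjI allI impI)
  have h: "h \<ge> 1" by (rule assms(1))
  show "d = real j / alpha h ^ (2*k)"
    if H: "k \<ge> 1 \<and> 1 \<le> j \<and> real j < alpha h ^ (2*k) \<and> n = j * q h (2 * int k - 1)" for k j
  proof -
    from H have j: "1 \<le> j" "real j < alpha h ^ (2*k)" and nk: "n = j * Qs h (2*k)" by (auto simp: q_odd)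
    from P1[OF h j] have p: "real (j * Qs h (2*k+1)) - alpha h * real n = real j / alpha h ^ (2*k)"
      "0 \<le> real j / alpha h ^ (2*k)" "real j / alpha h ^ (2*k) < 1" unfolding nk by auto
    have c1: "0 \<le> real_of_int (int (j * Qs h (2*k+1))) - alpha h * real n" using p(1) p(2) by simp
    have c2: "real_of_int (int (j * Qs h (2*k+1))) - alpha h * real n < 1" using p(1) p(3) by simp
    have "\<lceil>alpha h * real n\<rceil> = int (j * Qs h (2*k+1))" using ceil_eq[OF c1 c2] .
    then show ?thesis unfolding d_def using p(1) by simp
  qed
  show "d = (alpha h - 1) / alpha h ^ (2*k+1)"
    if H: "n = q h (2 * int k - 1) + q h (2 * int k)" for k
  proof -
    from H have nk: "n = Qs h (2*k) + Qs h (2*k+1)" by (simp add: q_odd q_even)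
    from P2[OF h, of k] have p: "real (Qs h (2*k+1) + Qs h (2*k+2)) - alpha h * real n = (alpha h - 1) / alpha h ^ (2*k+1)"
      "0 \<le> (alpha h - 1) / alpha h ^ (2*k+1)" "(alpha h - 1) / alpha h ^ (2*k+1) < 1" unfolding nk by auto
    have c1: "0 \<le> real_of_int (int (Qs h (2*k+1) + Qs h (2*k+2))) - alpha h * real n" using p(1) p(2) by simp
    have c2: "real_of_int (int (Qs h (2*k+1) + Qs h (2*k+2))) - alpha h * real n < 1" using p(1) p(3) by simp
    have "\<lceil>alpha h * real n\<rceil> = int (Qs h (2*k+1) + Qs h (2*k+2))" using ceil_eq[OF c1 c2] .
    then show ?thesis unfolding d_def using p(1) by simp
  qed
  show "d = (alpha h + 1) / alpha h ^ (2*k+2)"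
    if H: "int n = int (q h (2 * int k + 1)) - int (q h (2 * int k))" for k
  proof -
    from H have nk: "int n = int (Qs h (2*k+2)) - int (Qs h (2*k+1))" by (simp add: q_odd2 q_even)
    have kk: "int (Qs h (2*k+2)) - int (Qs h (2*k+1)) \<ge> 1" using nk assms(2) by simp
    have rn: "real n = real_of_int (int (Qs h (2*k+2)) - int (Qs h (2*k+1)))"
      using nk by (metis of_int_of_nat_eq)
    from P3[OF h kk] have p: "real_of_int (int (Qs h (2*k+3)) - int (Qs h (2*k+2))) - alpha h * real n = (alpha h + 1) / alpha h ^ (2*k+2)"
      "0 \<le> (alpha h + 1) / alpha h ^ (2*k+2)" "(alpha h + 1) / alpha h ^ (2*k+2) < 1" unfolding rn by auto
    have c1: "0 \<le> real_of_int (int (Qs h (2*k+3)) - int (Qs h (2*k+2))) - alpha h * real n" using p(1) p(2) by simp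
    have c2: "real_of_int (int (Qs h (2*k+3)) - int (Qs h (2*k+2))) - alpha h * real n < 1" using p(1) p(3) by simp
    have "\<lceil>alpha h * real n\<rceil> = int (Qs h (2*k+3)) - int (Qs h (2*k+2))" using ceil_eq[OF c1 c2] .
    then show ?thesis unfolding d_def using p(1) by simp
  qed
  assume N: "\<not> (\<exists>k j::nat. k \<ge> 1 \<and> 1 \<le> j \<and> real j < alpha h ^ (2*k)
               \<and> n = j * q h (2 * int k - 1))
           \<and> \<not> (\<exists>k::nat. n = q h (2 * int k - 1) + q h (2 * int k))
           \<and> \<not> (\<exists>k::nat. int n = int (q h (2 * int k + 1)) - int (q h (2 * int k)))"
  show "real n * d \<ge> 1"
  proof (rule ccontr)
    assume "\<not> real n * d \<ge> 1"
    then have lt: "real n * d < 1" by simp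
    have d0: "0 \<le> d" unfolding d_def by simp
    have "forms h n"
      using descent[OF h assms(2), of "\<lceil>alpha h * real n\<rceil>"] d0 lt unfolding d_def by simp
    moreover have "\<not> forms h n" using N unfolding forms_def q_odd q_even q_odd2 by blast
    ultimately show False by blast
  qed
qed


end
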